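(* Let $\phi=\frac{1+\sqrt5}{2}$ and let $\Gamma\subset SL_2(\mathbb R)$ be the group generated by $$\sigma_0=\begin{pmatrix}1&\phi\\0&1\end{pmatrix},\quad \sigma_1=\begin{pmatrix}\phi&\phi\\1&\phi\end{pmatrix},\quad \sigma_2=\begin{pmatrix}\phi&1\\\phi&\phi\end{pmatrix},\quad \sigma_3=\begin{pmatrix}1&0\\\phi&1\end{pmatrix}.$$ Let $S=\{\gamma\binom{1}{0}:\gamma\in\Gamma\}\subset\mathbb R^2$. There is a constant $C>0$ such that for every $0<\epsilon\le 1$ there exist two distinct points $s_1,s_2\in S$ with $\|s_1-s_2\|\le\epsilon$ and $s_1,s_2\in B(0,r)$, where $r\le C\epsilon^{-2}$.
   Context: $\|\cdot\|$ is the Euclidean norm on $\mathbb R^2$ and $B(0,r)$ is the closed ball of radius $r$ centered at the origin. $\Gamma$ acts on $\mathbb R^2$ by matrix multiplication on column vectors. *)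

theory Defs
  imports "HOL-Analysis.Analysis"
begin

definition phi :: real where "phi = (1 + sqrt 5) / 2"

definition mat2 :: "real \<Rightarrow> real \<Rightarrow> real \<Rightarrow> real \<Rightarrow> real^2^2" where
  "mat2 a b c d = vector [vector [a, b], vector [c, d]]"

definition sigma0 :: "real^2^2" where "sigma0 = mat2 1 phi 0 1"
definition sigma1 :: "real^2^2" where "sigma1 = mat2 phi phi 1 phi"
definition sigma2 :: "real^2^2" where "sigma2 = mat2 phi 1 phi phi"
definition sigma3 :: "real^2^2" where "sigma3 = mat2 1 0 phi 1"

definition gens :: "(real^2^2) set" where "gens = {sigma0, sigma1, sigma2, sigma3}"

inductive_set Gamma :: "(real^2^2) set" where
  Gamma_id: "mat 1 \<in> Gamma"
| Gamma_gen: "g \<in> gens \<Longrightarrow> x \<in> Gamma \<Longrightarrow> g ** x \<in> Gamma"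
| Gamma_inv: "g \<in> gens \<Longrightarrow> x \<in> Gamma \<Longrightarrow> matrix_inv g ** x \<in> Gamma"

definition e1 :: "real^2" where "e1 = vector [1, 0]"

definition orbitS :: "(real^2) set" where "orbitS = {g *v e1 | g. g \<in> Gamma}"

end

theory Submission
  imports Defs "HOL-Analysis.Analysis"
begin

lemma mat2_idx: "mat2 a b c d $ 1 $ 1 = a" "mat2 a b c d $ 1 $ 2 = b"
  "mat2 a b c d $ 2 $ 1 = c" "mat2 a b c d $ 2 $ 2 = d"
  by (simp_all add: mat2_def)

lemma mv2: "mat2 a b c d *v vector[x,y] = vector[a*x+b*y, c*x+d*y]"
  by (simp add: mat2_def vec_eq_iff forall_2 matrix_vector_mult_def sum_2)

lemma v2_eq: "(v::real^2) = vector[v$1, v$2]"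
  by (simp add: vec_eq_iff forall_2)

lemma det_mat2: "det (mat2 a b c d) = a*d - b*c"
  by (simp add: det_2 mat2_idx)

lemma phi_sq: "phi^2 = phi + 1"
  unfolding phi_def by (simp add: power2_eq_square field_simps)

lemma phi_bounds: "1.6 < phi" "phi < 1.7"
proof -
  have "sqrt 5 > 2.2" by (rule real_less_rsqrt) (simp add: power2_eq_square)
  moreover have "sqrt 5 < 2.4" by (rule real_less_lsqrt) (simp_all add: power2_eq_square)
  ultimately show "1.6 < phi" "phi < 1.7" unfolding phi_def by auto
qed

lemma inv_apply:
  assumes "invertible A" "A *v w = v"
  shows "matrix_inv A *v v = w"
proof -
  have "matrix_inv A ** A = mat 1"
    using assms(1) unfolding invertible_def matrix_inv_def
    by (rule someI_ex[where P="\<lambda>A'. A ** A' = mat 1 \<and> A' ** A = mat 1", THEN conjunct2])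
  then show ?thesis using assms(2) by (metis matrix_vector_mul_assoc matrix_vector_mul_lid)
qed

lemma orbit_gen: "g \<in> gens \<Longrightarrow> v \<in> orbitS \<Longrightarrow> g *v v \<in> orbitS"
  unfolding orbitS_def using Gamma_gen matrix_vector_mul_assoc by blast

lemma orbit_inv: "g \<in> gens \<Longrightarrow> v \<in> orbitS \<Longrightarrow> matrix_inv g *v v \<in> orbitS"
  unfolding orbitS_def using Gamma_inv matrix_vector_mul_assoc by blast

lemma e1_in: "e1 \<in> orbitS"
proof -
  have "e1 = mat 1 *v e1" by simp
  then show ?thesis unfolding orbitS_def using Gamma_id by blast
qed

lemma inv_s0: "invertible sigma0" unfolding invertible_det_nz sigma0_def det_mat2 by simp
lemma inv_s3: "invertible sigma3" unfolding invertible_det_nz sigma3_def det_mat2 by simp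

lemma T0: "vector[x,y] \<in> orbitS \<Longrightarrow> vector[x + of_int z * phi * y, y] \<in> orbitS"
proof (induction z arbitrary: rule: int_induct[where k=0])
  case base
  then show ?case by simp
next
  case (step1 i)
  have "sigma0 *v vector[x + of_int i * phi * y, y] = vector[x + of_int (i+1) * phi * y, y]"
    unfolding sigma0_def mv2 by (simp add: algebra_simps)
  then show ?case using step1 orbit_gen[of sigma0] by (metis gens_def insertI1)
next
  case (step2 i)
  have "sigma0 *v vector[x + of_int (i-1) * phi * y, y] = vector[x + of_int i * phi * y, y]"
    unfolding sigma0_def mv2 by (simp add: algebra_simps)
  then have "matrix_inv sigma0 *v vector[x + of_int i * phi * y, y] = vector[x + of_int (i-1) * phi * y, y]"
    using inv_apply inv_s0 by blast
  then show ?case using step2 orbit_inv[of sigma0] by (metis gens_def insertI1)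
qed

lemma T3: "vector[x,y] \<in> orbitS \<Longrightarrow> vector[x, y + of_int z * phi * x] \<in> orbitS"
proof (induction z arbitrary: rule: int_induct[where k=0])
  case base
  then show ?case by simp
next
  case (step1 i)
  have "sigma3 *v vector[x, y + of_int i * phi * x] = vector[x, y + of_int (i+1) * phi * x]"
    unfolding sigma3_def mv2 by (simp add: algebra_simps)
  then show ?case using step1 orbit_gen[of sigma3] by (metis gens_def insertI1 insertI2)
next
  case (step2 i)
  have "sigma3 *v vector[x, y + of_int (i-1) * phi * x] = vector[x, y + of_int i * phi * x]"
    unfolding sigma3_def mv2 by (simp add: algebra_simps)
  then have "matrix_inv sigma3 *v vector[x, y + of_int i * phi * x] = vector[x, y + of_int (i-1) * phi * x]"
    using inv_apply inv_s3 by blast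
  then show ?case using step2 orbit_inv[of sigma3] by (metis gens_def insertI1 insertI2)
qed

lemma pA: "vector[1 + of_int m * phi * (of_int a * phi), of_int a * phi] \<in> orbitS"
proof -
  have "vector[1, 0] \<in> orbitS" using e1_in e1_def by simp
  from T3[OF this, of a] have "vector[1, of_int a * phi] \<in> orbitS" by simp
  from T0[OF this, of m] show ?thesis by simp
qed

lemma pB: "vector[phi + of_int m * phi * (1 + of_int b * phi^2), 1 + of_int b * phi^2] \<in> orbitS"
proof -
  have "sigma1 *v e1 \<in> orbitS" using e1_in orbit_gen gens_def by blast
  moreover have "sigma1 *v e1 = vector[phi, 1]" unfolding sigma1_def e1_def mv2 by simp
  ultimately have "vector[phi, 1] \<in> orbitS" by simp
  from T3[OF this, of b] have "vector[phi, 1 + of_int b * phi^2] \<in> orbitS"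
    by (simp add: power2_eq_square algebra_simps)
  from T0[OF this, of m] show ?thesis by simp
qed

lemma sq_mod5: "(a::int)^2 mod 5 = 0 \<Longrightarrow> a mod 5 = 0"
proof -
  assume h: "a^2 mod 5 = 0"
  have e: "a^2 mod 5 = (a mod 5)^2 mod 5" by (simp add: power_mod)
  have "a mod 5 = 0 \<or> a mod 5 = 1 \<or> a mod 5 = 2 \<or> a mod 5 = 3 \<or> a mod 5 = 4" by linarith
  then show ?thesis using h e by auto
qed
lemma no_sol: "(a::int)^2 = 5*b^2 \<Longrightarrow> b = 0"
proof (induction "nat \<bar>b\<bar>" arbitrary: a b rule: less_induct)
  case less
  have "a^2 mod 5 = 0" using less.prems by simp
  then have "a mod 5 = 0" by (rule sq_mod5)
  then obtain c where c: "a = 5*c" by (metis mod_eq_0_iff_dvd dvd_def)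
  then have bc: "b^2 = 5*c^2" using less.prems by (simp add: power2_eq_square)
  then have "b mod 5 = 0" using sq_mod5[of b] by simp
  then obtain d where d: "b = 5*d" by (metis mod_eq_0_iff_dvd dvd_def)
  then have cd: "c^2 = 5*d^2" using bc by (simp add: power2_eq_square)
  show "b = 0"
  proof (rule ccontr)
    assume "b \<noteq> 0"
    then have "nat \<bar>d\<bar> < nat \<bar>b\<bar>" using d by auto
    then have "d = 0" using less.hyps[of d c] cd by simp
    then show False using d \<open>b \<noteq> 0\<close> by simp
  qed
qed

lemma normD: "(k::int) \<noteq> 0 \<Longrightarrow> j^2 - j*k - k^2 \<noteq> 0"
proof
  assume "k \<noteq> 0" "j^2 - j*k - k^2 = 0"
  then have "(2*j-k)^2 = 5*k^2" by (simp add: power2_eq_square algebra_simps)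
  then show False using no_sol \<open>k \<noteq> 0\<close> by blast
qed


lemma powr_m2: "(e::real) > 0 \<Longrightarrow> e powr (-2) = 1/e^2"
proof -
  assume "e > 0"
  have "e powr (-2) = 1 / e powr 2" by (simp add: powr_minus_divide)
  also have "e powr 2 = e^2" using \<open>e > 0\<close> by (simp add: powr_numeral)
  finally show ?thesis .
qed

lemma absmul: "\<bar>x\<bar> \<le> A \<Longrightarrow> \<bar>y\<bar> \<le> B \<Longrightarrow> \<bar>x*y\<bar> \<le> A*(B::real)"
  by (metis abs_ge_zero abs_mult mult_mono order_trans)

lemma iden_alg: "(x::real)^2 = x + 1 \<Longrightarrow> (k*x - j)*(k*(1-x) - j) = j^2 - j*k - k^2"
  by algebra

lemma norm2_le: "norm (v::real^2) \<le> \<bar>v$1\<bar> + \<bar>v$2\<bar>"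
  using norm_le_l1_cart[of v] by (simp add: sum_2)

theorem proposition1p2:
  shows "\<exists>C>0. \<forall>\<epsilon>::real. 0 < \<epsilon> \<and> \<epsilon> \<le> 1 \<longrightarrow>
           (\<exists>s1 s2 r. s1 \<in> orbitS \<and> s2 \<in> orbitS \<and> s1 \<noteq> s2 \<and> norm (s1 - s2) \<le> \<epsilon>
              \<and> s1 \<in> cball 0 r \<and> s2 \<in> cball 0 r \<and> r \<le> C * \<epsilon> powr (-2))"
proof (rule exI[of _ 1000], intro conjI allI impI)
  show "(0::real) < 1000" by simp
  fix \<epsilon> :: real assume "0 < \<epsilon> \<and> \<epsilon> \<le> 1"
  then have ep: "0 < \<epsilon>" "\<epsilon> \<le> 1" by auto
  have ph: "1.6 < phi" "phi < 1.7" by (rule phi_bounds)+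
  have phsq: "phi^2 = phi + 1" by (rule phi_sq)
  define N where "N = nat \<lceil>2/\<epsilon>\<rceil>"
  have pos2: "2/\<epsilon> > 0" using ep by simp
  have N1: "real N \<ge> 2/\<epsilon>" unfolding N_def by (simp add: real_nat_ceiling_ge)
  have Npos: "N > 0" using pos2 unfolding N_def by simp
  have "real N < 2/\<epsilon> + 1" unfolding N_def using pos2 by linarith
  moreover have "1 \<le> 1/\<epsilon>" using ep by simp
  ultimately have N3: "real N \<le> 3/\<epsilon>" by simp
  define n where "n = real N"
  have n1: "n \<ge> 1" using Npos n_def by simp
  obtain q and p :: "nat \<Rightarrow> int" where q: "0<q" "q \<le> int (N^1)"
    and qp: "\<And>i::nat. i<1 \<Longrightarrow> \<bar>of_int q * phi - of_int (p i)\<bar> < 1/N"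
    using Dirichlet_approx_simult[OF Npos, where \<theta>="\<lambda>_. phi" and n=1] by blast
  define k where "k = q"
  define j where "j = p 0"
  define \<Delta> where "\<Delta> = of_int k * phi - of_int j"
  have Dlt: "\<bar>\<Delta>\<bar> < 1/n" using qp[of 0] unfolding \<Delta>_def k_def j_def n_def by simp
  have Dle1: "\<bar>\<Delta>\<bar> \<le> 1" using Dlt n1
    by (smt (verit) divide_le_eq_1_pos)
  have k1: "1 \<le> real_of_int k" using q k_def by simp
  have kn: "real_of_int k \<le> n" using q k_def n_def by (metis of_int_le_iff of_int_of_nat_eq power_one_right)
  define D where "D = j^2 - j*k - k^2"
  have D0: "D \<noteq> 0" unfolding D_def using normD[of k j] k1 by simp
  have iden: "\<Delta> * (of_int k * (1 - phi) - of_int j) = of_int D"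
    unfolding \<Delta>_def D_def using iden_alg[OF phsq, of "of_int k" "of_int j"] by simp
  define W where "W = of_int k * (1 - phi) - of_int j"
  have "W = \<Delta> + of_int k * (1 - 2*phi)" unfolding W_def \<Delta>_def by (simp add: algebra_simps)
  then have "\<bar>W\<bar> \<le> \<bar>\<Delta>\<bar> + \<bar>real_of_int k * (1 - 2*phi)\<bar>"
    by (simp add: abs_triangle_ineq)
  also have "\<bar>real_of_int k * (1 - 2*phi)\<bar> = real_of_int k * \<bar>1 - 2*phi\<bar>"
    using k1 by (simp add: abs_mult)
  finally have "\<bar>W\<bar> \<le> \<bar>\<Delta>\<bar> + real_of_int k * \<bar>1 - 2*phi\<bar>" .
  moreover have "real_of_int k * \<bar>1 - 2*phi\<bar> \<le> n * 3"
    using absmul[of "real_of_int k" n "1 - 2*phi" 3] kn k1 ph by (simp add: abs_mult)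
  ultimately have Wb: "\<bar>W\<bar> \<le> 4*n" using Dle1 n1 by linarith
  have "1 \<le> \<bar>real_of_int D\<bar>" using D0 by linarith
  also have "\<bar>real_of_int D\<bar> = \<bar>\<Delta>\<bar> * \<bar>W\<bar>" using iden W_def by (metis abs_mult)
  also have "\<dots> \<le> \<bar>\<Delta>\<bar> * (4*n)" using Wb by (simp add: mult_left_mono)
  finally have Dge: "1 \<le> \<bar>\<Delta>\<bar> * (4*n)" .
  then have Dnz: "\<Delta> \<noteq> 0" by auto
  define t where "t = 1/(phi^2 * \<Delta>)"
  define m where "m = \<lfloor>t + 1/2\<rfloor>"
  have mt: "\<bar>of_int m - t\<bar> \<le> 1/2" unfolding m_def by linarith
  have phi2: "phi^2 > 2.56" using ph phsq by simp
  have tb: "\<bar>t\<bar> \<le> 2*n"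
  proof -
    have "\<bar>t\<bar> = 1/(phi^2 * \<bar>\<Delta>\<bar>)" unfolding t_def using phi2 by (simp add: abs_mult)
    also have "\<dots> \<le> 1/(2.56 * \<bar>\<Delta>\<bar>)"
      using phi2 Dnz by (intro divide_left_mono mult_right_mono) (auto simp: zero_less_mult_iff)
    also have "\<dots> \<le> 2*n" using Dge Dnz by (simp add: field_simps)
    finally show ?thesis .
  qed
  have mb: "\<bar>real_of_int m\<bar> \<le> 3*n" using mt tb n1 by linarith
  define a where "a = j - 1 + k"
  define b where "b = j - 1"
  define s1 :: "real^2" where "s1 = vector[1 + of_int m * phi * (of_int a * phi), of_int a * phi]"
  define s2 :: "real^2" where "s2 = vector[phi + of_int m * phi * (1 + of_int b * phi^2), 1 + of_int b * phi^2]"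
  have s1S: "s1 \<in> orbitS" unfolding s1_def by (rule pA)
  have s2S: "s2 \<in> orbitS" unfolding s2_def by (rule pB)
  have yd: "of_int a * phi - (1 + of_int b * phi^2) = \<Delta>"
    unfolding a_def b_def \<Delta>_def phsq by (simp add: algebra_simps)
  have phinv: "phi * (phi - 1) = 1" using phsq by (simp add: power2_eq_square algebra_simps)
  have "phi * \<Delta> * t = 1/phi" unfolding t_def using Dnz ph by (simp add: power2_eq_square field_simps)
  also have "1/phi = phi - 1" using phinv ph by (simp add: field_simps)
  finally have pdt: "phi * \<Delta> * t = phi - 1" .
  have xd: "(1 + of_int m * phi * (of_int a * phi)) - (phi + of_int m * phi * (1 + of_int b * phi^2))
      = phi * \<Delta> * (of_int m - t)"
  proof -
    have "(1 + of_int m * phi * (of_int a * phi)) - (phi + of_int m * phi * (1 + of_int b * phi^2))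
        = 1 - phi + of_int m * phi * (of_int a * phi - (1 + of_int b * phi^2))" by (simp add: algebra_simps)
    also have "\<dots> = 1 - phi + of_int m * phi * \<Delta>" using yd by simp
    also have "\<dots> = phi * \<Delta> * of_int m - phi * \<Delta> * t" using pdt by simp
    finally show ?thesis by (simp add: algebra_simps)
  qed
  have xdb: "\<bar>phi * \<Delta> * (of_int m - t)\<bar> \<le> 0.85 / n"
  proof -
    have "\<bar>phi * \<Delta> * (of_int m - t)\<bar> = phi * (\<bar>\<Delta>\<bar> * \<bar>of_int m - t\<bar>)" using ph by (simp add: abs_mult)
    also have "\<dots> \<le> 1.7 * ((1/n) * (1/2))"
      using ph Dlt mt n1 by (intro mult_mono) auto
    finally show ?thesis by simp
  qed
  have dist: "norm (s1 - s2) \<le> \<epsilon>"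
  proof -
    have "norm (s1 - s2) \<le> \<bar>(s1 - s2)$1\<bar> + \<bar>(s1 - s2)$2\<bar>" by (rule norm2_le)
    also have "\<dots> \<le> 0.85/n + 1/n" using xd xdb yd Dlt unfolding s1_def s2_def by simp
    also have "\<dots> \<le> 2/n" using n1 by (simp add: field_simps)
    also have "\<dots> \<le> \<epsilon>" using N1 n_def ep pos2 n1 by (simp add: field_simps mult.commute)
    finally show ?thesis .
  qed
  have neq: "s1 \<noteq> s2"
  proof
    assume "s1 = s2"
    then have "s1$2 = s2$2" by simp
    then show False using yd Dnz unfolding s1_def s2_def by simp
  qed
  have jb: "\<bar>real_of_int j\<bar> \<le> 2.7 * n"
  proof -
    have "real_of_int j = of_int k * phi - \<Delta>" unfolding \<Delta>_def by simp
    moreover have kp: "0 \<le> of_int k * phi" using k1 ph by simp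
    ultimately have "\<bar>real_of_int j\<bar> \<le> of_int k * phi + \<bar>\<Delta>\<bar>" by linarith
    moreover have "of_int k * phi \<le> n * 1.7" using kn k1 ph by (intro mult_mono) auto
    ultimately show ?thesis using Dle1 n1 by linarith
  qed
  have ab: "\<bar>real_of_int a\<bar> \<le> 5*n" unfolding a_def using jb kn k1 n1 by simp
  have y1b: "\<bar>real_of_int a * phi\<bar> \<le> 5*n*2" using absmul[OF ab, of phi 2] ph by simp
  have y2b: "\<bar>1 + real_of_int b * phi^2\<bar> \<le> 11*n" using yd y1b Dle1 n1 by linarith
  have x1b: "\<bar>1 + of_int m * phi * (of_int a * phi)\<bar> \<le> 1 + 3*n*2*(5*n*2)"
  proof -
    have "\<bar>of_int m * phi\<bar> \<le> 3*n*2" using absmul[OF mb, of phi 2] ph by simp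
    from absmul[OF this y1b] show ?thesis by simp
  qed
  have x2b: "\<bar>phi + of_int m * phi * (1 + of_int b * phi^2)\<bar> \<le> 2 + 3*n*2*(11*n)"
  proof -
    have "\<bar>of_int m * phi\<bar> \<le> 3*n*2" using absmul[OF mb, of phi 2] ph by simp
    from absmul[OF this y2b] show ?thesis using ph by simp
  qed
  have nsq: "n*n \<le> 9 * (1/\<epsilon>^2)"
  proof -
    have "n \<le> 3/\<epsilon>" using N3 n_def by simp
    then have "n*n \<le> (3/\<epsilon>)*(3/\<epsilon>)" using n1 ep by (intro mult_mono) auto
    then show ?thesis by (simp add: power2_eq_square)
  qed
  have u0: "0 \<le> 1/\<epsilon>^2" by simp
  have big: "n \<le> n*n" using n1 by simp
  have s1b: "norm s1 \<le> 1000 * \<epsilon> powr (-2)"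
  proof -
    have "norm s1 \<le> (1 + 3*n*2*(5*n*2)) + 5*n*2"
      using norm2_le[of s1] x1b y1b unfolding s1_def by simp
    also have "\<dots> \<le> 100 * (n*n)" using big n1 by (simp add: algebra_simps; linarith)
    also have "\<dots> \<le> 1000 * \<epsilon> powr (-2)" unfolding powr_m2[OF ep(1)] using nsq u0 by linarith
    finally show ?thesis .
  qed
  have s2b: "norm s2 \<le> 1000 * \<epsilon> powr (-2)"
  proof -
    have "norm s2 \<le> (2 + 3*n*2*(11*n)) + 11*n"
      using norm2_le[of s2] x2b y2b unfolding s2_def by simp
    also have "\<dots> \<le> 100 * (n*n)" using big n1 by (simp add: algebra_simps; linarith)
    also have "\<dots> \<le> 1000 * \<epsilon> powr (-2)" unfolding powr_m2[OF ep(1)] using nsq u0 by linarith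
    finally show ?thesis .
  qed
  show "\<exists>s1 s2 r. s1 \<in> orbitS \<and> s2 \<in> orbitS \<and> s1 \<noteq> s2 \<and> norm (s1 - s2) \<le> \<epsilon>
              \<and> s1 \<in> cball 0 r \<and> s2 \<in> cball 0 r \<and> r \<le> 1000 * \<epsilon> powr (-2)"
    using s1S s2S neq dist s1b s2b by (intro exI[of _ s1] exI[of _ s2] exI[of _ "1000 * \<epsilon> powr (-2)"]) simp
qed

end
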